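(* Let $D$ be a Dyck path of length $2n$. There is a bijection $\kappa$ from the set of columns of $S(D)$ that are below a step $\nearrow$ to the set of odd columns of $S(D)$ such that, for every such column $c$, $c$ and $\kappa(c)$ contain the same number of cells.
   Context: A Dyck path of length $2m$ is a lattice path from $(0,0)$ to $(2m,0)$ with steps $\nearrow=(1,1)$, $\searrow=(1,-1)$ never going below the $x$-axis; $P(x)$ denotes its height at abscissa $x$. A cell is a point $(a,b)\in\mathbb{Z}^2$ with $b\ge0$, $a+b$ even (the tilted square with vertices $(a,b),(a+1,b\pm1),(a+2,b)$). The Dyck shape of $P$ (length $2m$) is $S(P)=\{(a,b): b\ge0,\ a+b\text{ even},\ 0\le a\le 2m-2,\ b+1\le P(a+1)\}$. For $0\le a\le 2m-2$, the column $a$ of $S(P)$ (which is the $(a+1)$-st column counting from $1$) is the set of cells of $S(P)$ with first coordinate $a$. It is below a step $\nearrow$ if the $(a+1)$-st step of $P$ is $\nearrow$. It is an odd column if $a+1$ is odd, i.e. $a$ is even. *)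

theory Defs
  imports Main
begin

text \<open>A path is a list of steps: True = up step (1,1), False = down step (1,-1).
  The i-th step (counting from 1) is the list element at index i-1.\<close>

definition height :: "bool list \<Rightarrow> nat \<Rightarrow> int" where
  "height D x = (\<Sum>s\<leftarrow>take x D. if s then 1 else -1)"

definition dyck_path :: "nat \<Rightarrow> bool list \<Rightarrow> bool" where
  "dyck_path n D \<longleftrightarrow> length D = 2 * n \<and> (\<forall>x\<le>length D. height D x \<ge> 0)
     \<and> height D (length D) = 0"

text \<open>Dyck shape of a path of length 2m (here m = length D / 2, so 2m - 2 = length D - 2).\<close>
definition dyck_shape :: "bool list \<Rightarrow> (int \<times> int) set" where
  "dyck_shape D = {(a, b). b \<ge> 0 \<and> even (a + b) \<and> 0 \<le> a \<and> a \<le> int (length D) - 2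
      \<and> b + 1 \<le> height D (nat (a + 1))}"

definition column :: "bool list \<Rightarrow> int \<Rightarrow> (int \<times> int) set" where
  "column D a = {c \<in> dyck_shape D. fst c = a}"

definition columns_below_up :: "bool list \<Rightarrow> int set" where
  "columns_below_up D = {a. 0 \<le> a \<and> a \<le> int (length D) - 2 \<and> D ! nat a}"

definition odd_columns :: "bool list \<Rightarrow> int set" where
  "odd_columns D = {a. 0 \<le> a \<and> a \<le> int (length D) - 2 \<and> even a}"

end

theory Submission imports Defs begin

lemma card_filter_sum: "int (card {i. i<(L::nat) \<and> P i}) = (\<Sum>i<L. if P i then 1 else 0)"
proof (induction L)
  case 0 then show ?case by simp
next
  case (Suc L)
  have e: "{i. i<Suc L \<and> P i} = {i. i<L \<and> P i} \<union> (if P L then {L} else {})"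
    by (auto simp: less_Suc_eq)
  show ?case using Suc by (simp add: e card_insert_if)
qed

lemma height_Suc: "i < length D \<Longrightarrow> height D (Suc i) = height D i + (if D!i then 1 else -1)"
  by (simp add: height_def take_Suc_conv_app_nth)

lemma height_app: "x \<le> length D \<Longrightarrow> height (D@E) x = height D x"
  by (simp add: height_def)

lemma height_parity: "x \<le> length D \<Longrightarrow> odd (height D x) = odd x"
proof (induction x)
  case 0 then show ?case by (simp add: height_def)
next
  case (Suc x) then show ?case by (simp add: height_Suc)
qed

lemma crossing:
  "(\<Sum>i<length D. (if D!i \<and> height D (Suc i) = m+1 then 1 else 0)
      - (if \<not> D!i \<and> height D (Suc i) = m then 1 else 0) :: int)
   = (if 0 \<le> m \<and> m < height D (length D) then 1
      else if height D (length D) \<le> m \<and> m < 0 then -1 else 0)"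
proof (induction D rule: rev_induct)
  case Nil then show ?case by (simp add: height_def)
next
  case (snoc s D)
  have a: "(\<Sum>i<length D. (if (D@[s])!i \<and> height (D@[s]) (Suc i) = m+1 then 1 else 0)
      - (if \<not> (D@[s])!i \<and> height (D@[s]) (Suc i) = m then 1 else 0) :: int)
     = (\<Sum>i<length D. (if D!i \<and> height D (Suc i) = m+1 then 1 else 0)
      - (if \<not> D!i \<and> height D (Suc i) = m then 1 else 0) :: int)"
    by (rule sum.cong) (auto simp: nth_append height_app)
  have h: "height (D@[s]) (Suc (length D)) = height D (length D) + (if s then 1 else -1)"
    using height_Suc[of "length D" "D@[s]"] by (simp add: height_app)
  show ?case using snoc a h by (auto simp: height_app)
qed

lemma fiber_bij:
  assumes "finite A" "finite B" "\<And>v. card {a\<in>A. f a = v} = card {b\<in>B. f b = v}"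
  shows "\<exists>k. bij_betw k A B \<and> (\<forall>a\<in>A. f a = f (k a))"
proof -
  have "\<forall>v. \<exists>g. bij_betw g {a\<in>A. f a = v} {b\<in>B. f b = v}"
    using assms by (intro allI finite_same_card_bij) auto
  then obtain g where g: "\<And>v. bij_betw (g v) {a\<in>A. f a = v} {b\<in>B. f b = v}" by metis
  define k where "k a = g (f a) a" for a
  have k1: "k a \<in> B \<and> f (k a) = f a" if "a \<in> A" for a
    using bij_betw_apply[OF g[of "f a"]] that by (auto simp: k_def)
  have "inj_on k A"
  proof (rule inj_onI)
    fix a a' assume aa: "a \<in> A" "a' \<in> A" "k a = k a'"
    then have "f a = f a'" using k1 by metis
    then show "a = a'" using aa bij_betw_imp_inj_on[OF g[of "f a"]]
      by (auto simp: k_def inj_on_def)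
  qed
  moreover have "k ` A = B"
  proof
    show "k ` A \<subseteq> B" using k1 by auto
    show "B \<subseteq> k ` A"
    proof
      fix b assume b: "b \<in> B"
      then have "b \<in> g (f b) ` {a\<in>A. f a = f b}" using bij_betw_imp_surj_on[OF g[of "f b"]] by auto
      then obtain a where "a \<in> A" "f a = f b" "b = g (f b) a" by auto
      then show "b \<in> k ` A" by (metis image_eqI k_def)
    qed
  qed
  ultimately show ?thesis using k1 by (auto simp: bij_betw_def)
qed

lemma card_col_aux:
  assumes "odd (a + H)" "0 \<le> H"
  shows "card {b::int. 0\<le>b \<and> even(a+b) \<and> b+1 \<le> H} = nat ((H+1) div 2)"
proof (cases "even a")
  case True
  have "{b::int. 0\<le>b \<and> even(a+b) \<and> b+1 \<le> H} = (\<lambda>j. 2*j) ` {0..<(H+1) div 2}"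
  proof (rule set_eqI, rule iffI)
    fix b assume "b \<in> {b::int. 0\<le>b \<and> even(a+b) \<and> b+1 \<le> H}"
    then show "b \<in> (\<lambda>j. 2*j) ` {0..<(H+1) div 2}" using True assms
      by (auto elim!: evenE intro!: image_eqI)
  qed (use True assms in \<open>auto; presburger\<close>)
  moreover have "inj_on (\<lambda>j::int. 2*j) A" for A by (auto simp: inj_on_def)
  ultimately show ?thesis by (simp add: card_image)
next
  case False
  have "{b::int. 0\<le>b \<and> even(a+b) \<and> b+1 \<le> H} = (\<lambda>j. 2*j+1) ` {0..<(H+1) div 2}"
  proof (rule set_eqI, rule iffI)
    fix b assume "b \<in> {b::int. 0\<le>b \<and> even(a+b) \<and> b+1 \<le> H}"
    then have "odd b" "0 \<le> b" "b+1 \<le> H" using False by auto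
    then obtain j where "b = 2*j+1" by (metis oddE)
    then show "b \<in> (\<lambda>j. 2*j+1) ` {0..<(H+1) div 2}" using \<open>0\<le>b\<close> \<open>b+1\<le>H\<close> False assms
      by (auto intro!: image_eqI)
  qed (use False assms in \<open>auto; presburger\<close>)
  moreover have "inj_on (\<lambda>j::int. 2*j+1) A" for A by (auto simp: inj_on_def)
  ultimately show ?thesis by (simp add: card_image)
qed

theorem mainTheorem9:
  fixes n :: nat and D :: "bool list"
  assumes "dyck_path n D"
  shows "\<exists>\<kappa>. bij_betw \<kappa> (columns_below_up D) (odd_columns D)
           \<and> (\<forall>c\<in>columns_below_up D. card (column D c) = card (column D (\<kappa> c)))"
proof -
  define L where "L = length D"
  have hL: "height D L = 0" and hnn: "\<And>x. x \<le> L \<Longrightarrow> height D x \<ge> 0" and Lev: "L = 2*n"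
    using assms by (auto simp: dyck_path_def L_def)
  define Fn where "Fn i = nat ((height D (Suc i) + 1) div 2)" for i
  define U where "U = {i. i<L \<and> D!i}"
  define E where "E = {i. i<L \<and> even i}"
  have lastdown: "\<not> D!i" if "i < L" "\<not> int i \<le> int L - 2" for i
  proof
    assume d: "D!i"
    have "i = L - 1" using that by auto
    then have "Suc i = L" using that by simp
    then have "height D L = height D i + 1" using height_Suc[of i D] d that by (simp add: L_def)
    then show False using hL hnn[of i] that by simp
  qed
  have cbu: "columns_below_up D = int ` U"
  proof (rule set_eqI, rule iffI)
    fix a assume "a \<in> columns_below_up D"
    then show "a \<in> int ` U" unfolding columns_below_up_def U_def L_def
      by (auto intro!: image_eqI[of _ _ "nat a"])
  next
    fix a assume "a \<in> int ` U"
    then show "a \<in> columns_below_up D" unfolding columns_below_up_def U_def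
      using lastdown by (auto simp: L_def)
  qed
  have oc: "odd_columns D = int ` E"
  proof (rule set_eqI, rule iffI)
    fix a assume "a \<in> odd_columns D"
    then show "a \<in> int ` E" unfolding odd_columns_def E_def L_def
      by (auto intro!: image_eqI[of _ _ "nat a"] simp: even_nat_iff)
  next
    fix a assume "a \<in> int ` E"
    then show "a \<in> odd_columns D" unfolding odd_columns_def E_def
      using Lev by (auto simp: L_def)
  qed
  have colcard: "card (column D (int i)) = Fn i" if "i < L" "int i \<le> int L - 2" for i
  proof -
    have ni: "nat (int i + 1) = Suc i" by simp
    have "column D (int i) = Pair (int i) ` {b::int. 0\<le>b \<and> even(int i+b) \<and> b+1 \<le> height D (Suc i)}"
      using that by (auto simp: column_def dyck_shape_def L_def ni)
    moreover have "odd (int i + height D (Suc i))"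
      using height_parity[of "Suc i" D] that by (simp add: L_def)
    ultimately show ?thesis using card_col_aux[of "int i" "height D (Suc i)"] hnn[of "Suc i"] that
      by (simp add: card_image inj_on_def Fn_def del: even_add)
  qed
  have Ucol: "card (column D (int i)) = Fn i" if "i \<in> U" for i
    using that colcard lastdown U_def by auto
  have Ecol: "card (column D (int i)) = Fn i" if "i \<in> E" for i
  proof -
    have "i < L" "even i" using that E_def by auto
    moreover then have "int i \<le> int L - 2" using Lev by presburger
    ultimately show ?thesis using colcard by simp
  qed
  have key: "card {i. i<L \<and> D!i \<and> Fn i = v} = card {i. i<L \<and> even i \<and> Fn i = v}" for v
  proof -
    let ?m = "2 * int v - 1"
    have pw: "(if D!i \<and> Fn i = v then 1 else 0) - (if even i \<and> Fn i = v then 1 else 0)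
      = (if D!i \<and> height D (Suc i) = ?m+1 then 1 else 0)
      - (if \<not> D!i \<and> height D (Suc i) = ?m then 1 else 0 :: int)" if "i < L" for i
    proof -
      have p: "odd (height D (Suc i)) = odd (Suc i)" using height_parity[of "Suc i" D] that by (simp add: L_def)
      have nn: "height D (Suc i) \<ge> 0" using hnn[of "Suc i"] that by simp
      have f: "Fn i = v \<longleftrightarrow> height D (Suc i) = ?m \<or> height D (Suc i) = ?m + 1"
        unfolding Fn_def using nn by auto
      consider "height D (Suc i) = ?m" | "height D (Suc i) = ?m + 1"
        | "height D (Suc i) \<noteq> ?m" "height D (Suc i) \<noteq> ?m + 1" by blast
      then show ?thesis
      proof cases
        case 1
        then have "even i" using p by presburger
        then show ?thesis using f 1 by simp
      next
        case 2
        then have "odd i" using p by presburger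
        then show ?thesis using f 2 by simp
      next
        case 3
        then show ?thesis using f by simp
      qed
    qed
    have "int (card {i. i<L \<and> D!i \<and> Fn i = v}) - int (card {i. i<L \<and> even i \<and> Fn i = v})
      = (\<Sum>i<L. (if D!i \<and> Fn i = v then 1 else 0) - (if even i \<and> Fn i = v then 1 else 0))"
      by (simp add: card_filter_sum sum_subtractf)
    also have "\<dots> = (\<Sum>i<L. (if D!i \<and> height D (Suc i) = ?m+1 then 1 else 0)
      - (if \<not> D!i \<and> height D (Suc i) = ?m then 1 else 0 :: int))"
      by (rule sum.cong) (auto simp: pw)
    also have "\<dots> = 0" using crossing[of D ?m] hL by (auto simp: L_def)
    finally show ?thesis by simp
  qed
  have fib: "card {a\<in>columns_below_up D. card (column D a) = v}
      = card {b\<in>odd_columns D. card (column D b) = v}" for v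
  proof -
    have "{a\<in>columns_below_up D. card (column D a) = v} = int ` {i. i<L \<and> D!i \<and> Fn i = v}"
      unfolding cbu using Ucol by (auto simp: U_def)
    moreover have "{b\<in>odd_columns D. card (column D b) = v} = int ` {i. i<L \<and> even i \<and> Fn i = v}"
      unfolding oc using Ecol by (auto simp: E_def)
    ultimately show ?thesis using key by (simp add: card_image)
  qed
  have "finite (columns_below_up D)" "finite (odd_columns D)"
    unfolding cbu oc U_def E_def by auto
  from fiber_bij[OF this fib] show ?thesis by metis
qed

end
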